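(* Let $s$ be a schedule, $n\ge 2$, and $t_1,\dots,t_n$ distinct transactions of $s$. Suppose there are operations $p_k,q_k\in t_k$ ($k=1,\dots,n$), all accessing the same object $x$, such that $(p_k,q_{k+1})$ is a conflicting pair for $k=1,\dots,n-1$ and $(p_n,q_1)$ is a conflicting pair (so the conflict graph contains the cycle $t_1\to t_2\to\cdots\to t_n\to t_1$ with all edges on $x$). Then there exist two distinct transactions $t_a,t_b\in\{t_1,\dots,t_n\}$ such that the conflict graph contains both an edge on $x$ from $t_a$ to $t_b$ and an edge on $x$ from $t_b$ to $t_a$. *)

theory Defs
  imports Main
begin

text \<open>A schedule is a finite sequence
  of operations; an operation of the schedule is identified by its position
  in the sequence (so repeated identical operations are distinct events).\<close>

datatype action = Read | Write

datatype ('t, 'x) operation = Op (op_trans: 't) (op_action: action) (op_obj: 'x)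

type_synonym ('t, 'x) schedule = "('t, 'x) operation list"

definition transactions :: "('t, 'x) schedule \<Rightarrow> 't set" where
  "transactions s = op_trans ` set s"

definition op_of :: "('t, 'x) schedule \<Rightarrow> nat \<Rightarrow> 't \<Rightarrow> 'x \<Rightarrow> bool" where
  "op_of s i t x \<longleftrightarrow> i < length s \<and> op_trans (s ! i) = t \<and> op_obj (s ! i) = x"

definition conflicting :: "('t, 'x) schedule \<Rightarrow> nat \<Rightarrow> nat \<Rightarrow> bool" where
  "conflicting s i j \<longleftrightarrow> i < j \<and> j < length s
     \<and> op_trans (s ! i) \<noteq> op_trans (s ! j)
     \<and> op_obj (s ! i) = op_obj (s ! j)
     \<and> (op_action (s ! i) = Write \<or> op_action (s ! j) = Write)"

definition conflict_graph :: "('t, 'x) schedule \<Rightarrow> ('t \<times> 'x \<times> 't) set" where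
  "conflict_graph s = {(t, x, t'). \<exists>i j. conflicting s i j \<and> op_of s i t x \<and> op_of s j t' x}"

end

theory Submission
  imports Defs
begin

lemma cg_intro:
  assumes "conflicting s i j" "op_of s i a x" "op_of s j b x"
  shows "(a, x, b) \<in> conflict_graph s"
  using assms unfolding conflict_graph_def by blast

theorem theorem2:
  fixes s :: "('t, 'x) schedule" and n :: nat and t :: "nat \<Rightarrow> 't"
    and p q :: "nat \<Rightarrow> nat" and x :: 'x
  assumes "n \<ge> 2"
    and "inj_on t {1..n}"
    and "\<And>k. k \<in> {1..n} \<Longrightarrow> t k \<in> transactions s"
    and "\<And>k. k \<in> {1..n} \<Longrightarrow> op_of s (p k) (t k) x \<and> op_of s (q k) (t k) x"
    and "\<And>k. k \<in> {1..<n} \<Longrightarrow> conflicting s (p k) (q (k + 1))"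
    and "conflicting s (p n) (q 1)"
  shows "\<exists>a\<in>{1..n}. \<exists>b\<in>{1..n}. t a \<noteq> t b
           \<and> (t a, x, t b) \<in> conflict_graph s \<and> (t b, x, t a) \<in> conflict_graph s"
proof -
  have pred: "\<exists>j\<in>{1..n}. j \<noteq> k \<and> conflicting s (p j) (q k)" if k: "k \<in> {1..n}" for k
  proof (cases "k = 1")
    case True thus ?thesis using assms(1,6) by (intro bexI[of _ n]) auto
  next
    case False
    hence "k - 1 \<in> {1..<n}" "k - 1 + 1 = k" using k by auto
    thus ?thesis using assms(5)[of "k - 1"] False k by (intro bexI[of _ "k - 1"]) auto
  qed
  define m where "m = Min (q ` {1..n})"
  have "m \<in> q ` {1..n}" unfolding m_def using assms(1) by (intro Min_in) auto
  then obtain c where c: "c \<in> {1..n}" "q c = m" by auto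
  have cmin: "\<And>k. k \<in> {1..n} \<Longrightarrow> q c \<le> q k" using c unfolding m_def by (metis Min_le finite_atLeastAtMost finite_imageI image_eqI)
  obtain a where a: "a \<in> {1..n}" "a \<noteq> c" "conflicting s (p a) (q c)" using pred[OF c(1)] by blast
  obtain b where b: "b \<in> {1..n}" "b \<noteq> a" "conflicting s (p b) (q a)" using pred[OF a(1)] by blast
  have tac: "t a \<noteq> t c" using a c assms(2) by (metis inj_onD)
  have tab: "t a \<noteq> t b" using a b assms(2) by (metis inj_onD)
  have oa: "op_of s (p a) (t a) x" "op_of s (q a) (t a) x" using assms(4)[OF a(1)] by auto
  have ob: "op_of s (p b) (t b) x" "op_of s (q b) (t b) x" using assms(4)[OF b(1)] by auto
  have oc: "op_of s (p c) (t c) x" "op_of s (q c) (t c) x" using assms(4)[OF c(1)] by auto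
  show ?thesis
  proof (cases "op_action (s ! q c) = Write")
    case True
    have "q c \<noteq> q a" using oa oc tac unfolding op_of_def by auto
    hence "q c < q a" using cmin[OF a(1)] by auto
    hence "conflicting s (q c) (q a)" using True oa oc tac unfolding conflicting_def op_of_def by auto
    hence "(t c, x, t a) \<in> conflict_graph s" using oa oc by (intro cg_intro[of s "q c" "q a"])
    moreover have "(t a, x, t c) \<in> conflict_graph s" using a(3) oa oc by (intro cg_intro[of s "p a" "q c"])
    ultimately show ?thesis using a c tac by blast
  next
    case False
    hence w: "op_action (s ! p a) = Write" using a(3) unfolding conflicting_def by auto
    have "p a < q b" using a(3) cmin[OF b(1)] unfolding conflicting_def by auto
    hence "conflicting s (p a) (q b)" using w oa ob tab unfolding conflicting_def op_of_def by auto
    hence "(t a, x, t b) \<in> conflict_graph s" using oa ob by (intro cg_intro[of s "p a" "q b"])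
    moreover have "(t b, x, t a) \<in> conflict_graph s" using b(3) oa ob by (intro cg_intro[of s "p b" "q a"])
    ultimately show ?thesis using a b tab by blast
  qed
qed

end
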